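(* Let $n=p^a$ with $p$ prime and $a\in\mathbb{N}$. Then the number of distinct $n\times n$ principal reversible squares is $N_n=\binom{2a-1}{a}$.
   Context: A reversible square matrix is a real matrix $M=(M_{i,j})$ with indices $i,j\in\mathbb{Z}_n=\mathbb{Z}/n\mathbb{Z}$ (top-left entry index $(1,1)$, indices computed modulo $n$) such that (R) $M_{i,j}+M_{i,n+1-j}=M_{i,k}+M_{i,n+1-k}$ and $M_{i,j}+M_{n+1-i,j}=M_{k,j}+M_{n+1-k,j}$ for all $i,j,k$, and (V) $M_{i,j}+M_{k,l}=M_{i,l}+M_{k,j}$ for all $i,j,k,l$. An $n\times n$ principal reversible square is a reversible square matrix whose set of entries is exactly $\{1,\dots,n^2\}$, whose entries increase along each row and each column, and with $M_{1,1}=1$, $M_{1,2}=2$. *)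

theory Defs
  imports Complex_Main "HOL-Computational_Algebra.Primes"
begin

text \<open>An n x n real matrix is represented as a function M :: nat => nat => real whose
  entries live at indices 1..n (and which is 0 outside, so that distinct matrices
  correspond to distinct functions).\<close>

definition midx :: "nat \<Rightarrow> nat \<Rightarrow> nat" where
  "midx n i = ((i + n - 1) mod n) + 1"

definition ent :: "nat \<Rightarrow> (nat \<Rightarrow> nat \<Rightarrow> real) \<Rightarrow> nat \<Rightarrow> nat \<Rightarrow> real" where
  "ent n M i j = M (midx n i) (midx n j)"

definition is_matrix :: "nat \<Rightarrow> (nat \<Rightarrow> nat \<Rightarrow> real) \<Rightarrow> bool" where
  "is_matrix n M \<longleftrightarrow> (\<forall>i j. \<not> (i \<in> {1..n} \<and> j \<in> {1..n}) \<longrightarrow> M i j = 0)"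

definition reversible_square :: "nat \<Rightarrow> (nat \<Rightarrow> nat \<Rightarrow> real) \<Rightarrow> bool" where
  "reversible_square n M \<longleftrightarrow> is_matrix n M \<and>
     (\<forall>i\<in>{1..n}. \<forall>j\<in>{1..n}. \<forall>k\<in>{1..n}.
        ent n M i j + ent n M i (n + 1 - j) = ent n M i k + ent n M i (n + 1 - k) \<and>
        ent n M i j + ent n M (n + 1 - i) j = ent n M k j + ent n M (n + 1 - k) j) \<and>
     (\<forall>i\<in>{1..n}. \<forall>j\<in>{1..n}. \<forall>k\<in>{1..n}. \<forall>l\<in>{1..n}.
        ent n M i j + ent n M k l = ent n M i l + ent n M k j)"

definition principal_reversible_square :: "nat \<Rightarrow> (nat \<Rightarrow> nat \<Rightarrow> real) \<Rightarrow> bool" where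
  "principal_reversible_square n M \<longleftrightarrow> reversible_square n M \<and>
     {ent n M i j | i j. i \<in> {1..n} \<and> j \<in> {1..n}} = real ` {1..n^2} \<and>
     (\<forall>i\<in>{1..n}. \<forall>j\<in>{1..n}. j < n \<longrightarrow> ent n M i j < ent n M i (j + 1)) \<and>
     (\<forall>i\<in>{1..n}. \<forall>j\<in>{1..n}. i < n \<longrightarrow> ent n M i j < ent n M (i + 1) j) \<and>
     ent n M 1 1 = 1 \<and> ent n M 1 2 = 2"

end

theory Submission
  imports Defs
begin


definition tiling :: "nat \<Rightarrow> nat set \<Rightarrow> nat set \<Rightarrow> bool" where
  "tiling N A B \<longleftrightarrow> 0 \<in> A \<and> 0 \<in> B \<and> (\<forall>a\<in>A. \<forall>b\<in>B. a + b < N) \<and>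
     (\<forall>x<N. \<exists>a\<in>A. \<exists>b\<in>B. x = a + b) \<and>
     (\<forall>a\<in>A. \<forall>b\<in>B. \<forall>a'\<in>A. \<forall>b'\<in>B. a + b = a' + b' \<longrightarrow> a = a' \<and> b = b')"

lemma tiling_sym: "tiling N A B \<Longrightarrow> tiling N B A"
  unfolding tiling_def by (metis add.commute)

lemma tiling_sub: assumes "tiling N A B" shows "A \<subseteq> {..<N}" "B \<subseteq> {..<N}"
  using assms unfolding tiling_def by force+

lemma tiling_fin: assumes "tiling N A B" shows "finite A" "finite B"
  using tiling_sub[OF assms] finite_subset by blast+

lemma tiling_dec: assumes "tiling N A B" "x < N" obtains a b where "a \<in> A" "b \<in> B" "x = a + b"
  using assms unfolding tiling_def by blast

lemma tiling_dec': assumes "tiling N A B" "x < N" shows "\<exists>a\<in>A. \<exists>b\<in>B. x = a + b"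
  using assms unfolding tiling_def by blast

lemma tiling_uniq: assumes "tiling N A B" "a \<in> A" "b \<in> B" "a' \<in> A" "b' \<in> B" "a + b = a' + b'"
  shows "a = a'" "b = b'"
  using assms unfolding tiling_def by blast+

lemma tiling_lt: assumes "tiling N A B" "a \<in> A" "b \<in> B" shows "a + b < N"
  using assms unfolding tiling_def by blast

lemma tiling_card: assumes T: "tiling N A B" shows "card A * card B = N"
proof -
  have "bij_betw (\<lambda>(a,b). a + b) (A \<times> B) {..<N}"
    unfolding bij_betw_def
  proof
    show "inj_on (\<lambda>(a,b). a + b) (A \<times> B)"
      by (auto simp: inj_on_def dest: tiling_uniq[OF T])
    show "(\<lambda>(a,b). a + b) ` (A \<times> B) = {..<N}"
    proof
      show "(\<lambda>(a,b). a + b) ` (A \<times> B) \<subseteq> {..<N}" using tiling_lt[OF T] by auto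
      show "{..<N} \<subseteq> (\<lambda>(a,b). a + b) ` (A \<times> B)"
      proof
        fix x assume "x \<in> {..<N}"
        then obtain a b where "a \<in> A" "b \<in> B" "x = a + b" using tiling_dec[OF T] by blast
        then show "x \<in> (\<lambda>(a,b). a + b) ` (A \<times> B)" by force
      qed
    qed
  qed
  then have "card (A \<times> B) = N" using bij_betw_same_card by fastforce
  then show ?thesis by (simp add: card_cartesian_product)
qed

lemma block:
  assumes T: "tiling N A B" and mA: "m \<in> A" and m0: "0 < m"
    and minm: "\<forall>a\<in>A. 0 < a \<longrightarrow> m \<le> a"
  shows "\<forall>t<N. (t \<in> A \<longrightarrow> m dvd t) \<and> (t \<in> B \<longleftrightarrow> t - t mod m \<in> B)"
proof -
  have mN: "m < N" using tiling_lt[OF T mA, of 0] T unfolding tiling_def by auto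
  have low: "x \<in> B" if xm: "x < m" for x
  proof -
    have "x < N" using xm mN by simp
    then obtain a b where ab: "a \<in> A" "b \<in> B" "x = a + b" using tiling_dec[OF T, of x] by blast
    then have "a = 0" using minm xm by force
    then show ?thesis using ab by simp
  qed
  have "t < N \<Longrightarrow> (t \<in> A \<longrightarrow> m dvd t) \<and> (t \<in> B \<longleftrightarrow> t - t mod m \<in> B)" for t
  proof (induction t rule: less_induct)
    case (less t)
    note IH = less.IH
    show ?case
    proof (cases "t mod m = 0")
      case True
      then show ?thesis by auto
    next
      case False
      define q where "q = t mod m"
      have q0: "0 < q" using False q_def by simp
      have qm: "q < m" using q_def m0 by simp
      have qt: "q \<le> t" using q_def by simp
      have mdq: "m dvd t - q" using q_def by (simp add: minus_mod_eq_mult_div)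
      have notA: "t \<notin> A"
      proof
        assume tA: "t \<in> A"
        obtain a1 b1 where ab1: "a1 \<in> A" "b1 \<in> B" "t - q = a1 + b1"
          using tiling_dec'[OF T, of "t - q"] less.prems diff_le_self le_less_trans by meson
        have "a1 < t" using ab1 q0 qt by linarith
        then have ma1: "m dvd a1" using IH ab1 less.prems by auto
        have mb1: "m dvd b1" using ma1 mdq ab1 by (metis dvd_add_right_iff)
        show False
        proof (cases "a1 = 0")
          case True
          then have "t - q \<in> B" using ab1 by simp
          moreover have "m - q \<in> B" using low qm q0 by simp
          moreover have "t + (m - q) = m + (t - q)" using qm qt by simp
          ultimately have "t = m" using tiling_uniq[OF T tA _ mA] by blast
          then show False using q_def q0 by simp
        next
          case False
          then have "m \<le> a1" using minm ab1 by auto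
          then have lt: "b1 + q < t" using ab1 qt qm by linarith
          have "(b1 + q) mod m = q" using mb1 qm by (simp add: mod_add_left_eq[symmetric])
          then have "b1 + q \<in> B" using IH[OF lt] lt less.prems ab1 by auto
          moreover have "a1 + (b1 + q) = t + 0" using ab1 qt by simp
          moreover have "0 \<in> B" using T unfolding tiling_def by simp
          ultimately have "a1 = t" using tiling_uniq(1)[OF T ab1(1) _ tA] by blast
          then show False using ma1 q_def q0 by auto
        qed
      qed
      have "t \<in> B \<longleftrightarrow> t - q \<in> B"
      proof
        assume tB: "t - q \<in> B"
        obtain a b where ab: "a \<in> A" "b \<in> B" "t = a + b"
          using tiling_dec'[OF T, of t] less.prems by meson
        show "t \<in> B"
        proof (cases "a = 0")
          case True then show ?thesis using ab by simp
        next
          case False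
          have "a \<noteq> t" using notA ab(1) by metis
          then have "a < t" using ab by simp
          then have ma: "m dvd a" using IH ab less.prems by auto
          have "m \<le> a" using False minm ab by auto
          then have bt: "b < t" using ab m0 by linarith
          have "b mod m = q" using ma ab q_def by (metis mod_add_right_eq add.commute dvd_imp_mod_0 add_0)
          then have "b - q \<in> B" using IH[OF bt] bt less.prems ab by auto
          moreover have "t - q = a + (b - q)" using ab \<open>b mod m = q\<close>
            by (metis add_diff_assoc mod_le_divisor m0 mod_less_eq_dividend)
          ultimately have "a = 0" using tiling_uniq[OF T ab(1) _ _ tB, of "b - q" 0] T
            unfolding tiling_def by auto
          then show ?thesis using False by simp
        qed
      next
        assume tB: "t \<in> B"
        obtain a b where ab: "a \<in> A" "b \<in> B" "t - q = a + b"
          using tiling_dec'[OF T, of "t - q"] less.prems diff_le_self le_less_trans by meson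
        show "t - q \<in> B"
        proof (cases "a = 0")
          case True then show ?thesis using ab by simp
        next
          case False
          have "a < t" using ab q0 qt by linarith
          then have ma: "m dvd a" using IH ab less.prems by auto
          have mb: "m dvd b" using ma mdq ab by (metis dvd_add_right_iff)
          have "m \<le> a" using False minm ab by auto
          then have lt: "b + q < t" using ab qt qm by linarith
          have "(b + q) mod m = q" using mb qm by (simp add: mod_add_left_eq[symmetric])
          then have "b + q \<in> B" using IH[OF lt] lt less.prems ab by auto
          moreover have "t = a + (b + q)" using ab qt by simp
          ultimately have "a = 0" using tiling_uniq[OF T ab(1) _ _ tB, of "b + q" 0] T
            unfolding tiling_def by auto
          then show ?thesis using False by simp
        qed
      qed
      then show ?thesis using notA q_def by simp
    qed
  qed
  then show ?thesis by blast
qed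



lemma block_dvd:
  assumes T: "tiling N A B" and mA: "m \<in> A" and m0: "0 < m"
    and minm: "\<forall>a\<in>A. 0 < a \<longrightarrow> m \<le> a"
  shows "m dvd N"
proof (rule ccontr)
  assume nd: "\<not> m dvd N"
  note BL = block[OF T mA m0 minm]
  define r where "r = N mod m"
  have r0: "0 < r" using nd r_def by (simp add: dvd_eq_mod_eq_0)
  have rm: "r < m" using r_def m0 by simp
  have rN: "r \<le> N" using r_def by simp
  have cN: "N - r < N" using r0 rN by simp
  have mc: "m dvd N - r" using r_def by (simp add: minus_mod_eq_mult_div)
  obtain a b where ab: "a \<in> A" "b \<in> B" "N - r = a + b" using tiling_dec'[OF T cN] by blast
  have "a < N" using ab cN by linarith
  then have ma: "m dvd a" using BL[rule_format, OF \<open>a < N\<close>] ab(1) by simp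
  have mb: "m dvd b" using ma mc ab by (metis dvd_add_right_iff)
  show False
  proof (cases "a = 0")
    case True
    then have "N - r \<in> B" using ab by simp
    then have "m + (N - r) < N" using tiling_lt[OF T mA] by simp
    then show False using rm rN by linarith
  next
    case False
    then have "m \<le> a" using minm ab by auto
    then have lt: "b + r < N" using ab rN m0 by linarith
    have "(b + r) mod m = r" using mb rm by (simp add: mod_add_left_eq[symmetric])
    then have "b + r \<in> B" using BL[rule_format, OF lt] ab(2) by simp
    then have "a + (b + r) < N" using tiling_lt[OF T ab(1)] by simp
    then show False using ab rN by linarith
  qed
qed

lemma base_arith:
  fixes t p m :: nat assumes "p dvd m"
  shows "(t - t mod p) - (t - t mod p) mod m = t - t mod m"
proof -
  obtain s where m: "m = p * s" using assms by auto
  have "t - t mod p = p * (t div p)" by (simp add: minus_mod_eq_mult_div)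
  moreover have "t - t mod m = m * (t div m)" by (simp add: minus_mod_eq_mult_div)
  moreover have "p * (t div p) - (p * (t div p)) mod m = m * ((p * (t div p)) div m)"
    by (simp add: minus_mod_eq_mult_div)
  moreover have "(p * (t div p)) div m = t div m"
  proof (cases "p = 0")
    case True then show ?thesis using m by simp
  next
    case False
    then show ?thesis using m by (simp add: div_mult2_eq)
  qed
  ultimately show ?thesis by simp
qed

lemma pblock:
  assumes p: "prime p" and T: "tiling (p ^ Suc k) A B" and oneB: "1 \<in> B"
  shows "(\<forall>a\<in>A. p dvd a) \<and> (\<forall>t<p ^ Suc k. t \<in> B \<longleftrightarrow> t - t mod p \<in> B)"
proof (cases "A = {0}")
  case True
  have allB: "t \<in> B" if tl: "t < p ^ Suc k" for t
  proof -
    obtain a b where "a \<in> A" "b \<in> B" "t = a + b" using tiling_dec'[OF T tl] by blast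
    then show ?thesis using True by simp
  qed
  have "t - t mod p < p ^ Suc k" if "t < p ^ Suc k" for t using that by linarith
  then show ?thesis using True allB by auto
next
  case False
  have fin: "finite A" using tiling_fin[OF T] by simp
  have A0: "0 \<in> A" using T unfolding tiling_def by simp
  have ne: "A - {0} \<noteq> {}" using False A0 by auto
  define m where "m = Min (A - {0})"
  have mA: "m \<in> A" "m \<noteq> 0" using Min_in[OF _ ne] fin m_def by auto
  have minm: "\<forall>a\<in>A. 0 < a \<longrightarrow> m \<le> a" using fin m_def by auto
  have m0: "0 < m" using mA by simp
  note BL = block[OF T mA(1) m0 minm]
  have "m dvd p ^ Suc k" using block_dvd[OF T mA(1) m0 minm] .
  then obtain i where i: "m = p ^ i" using divides_primepow_nat[OF p, of m "Suc k"] by blast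
  have B0: "0 \<in> B" using T unfolding tiling_def by simp
  have "m \<noteq> 1"
  proof
    assume "m = 1"
    then have "1 \<in> A" using mA by simp
    then have "(1::nat) = 0" using tiling_uniq(1)[OF T _ B0 A0 oneB] by simp
    then show False by simp
  qed
  then have "i \<noteq> 0" using i by auto
  then have pm: "p dvd m" using i by (simp add: dvd_power)
  have "\<forall>a\<in>A. p dvd a"
  proof
    fix a assume aA: "a \<in> A"
    then have "a < p ^ Suc k" using tiling_sub[OF T] by auto
    then have "m dvd a" using BL aA by simp
    then show "p dvd a" using pm by (rule dvd_trans[rotated])
  qed
  moreover have "\<forall>t<p ^ Suc k. t \<in> B \<longleftrightarrow> t - t mod p \<in> B"
  proof (intro allI impI)
    fix t assume t: "t < p ^ Suc k"
    have t': "t - t mod p < p ^ Suc k" using t by linarith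
    have "t \<in> B \<longleftrightarrow> t - t mod m \<in> B" using BL[rule_format, OF t] by simp
    moreover have "t - t mod p \<in> B \<longleftrightarrow> (t - t mod p) - (t - t mod p) mod m \<in> B" using BL[rule_format, OF t'] by simp
    ultimately show "t \<in> B \<longleftrightarrow> t - t mod p \<in> B" using base_arith[OF pm, of t] by simp
  qed
  ultimately show ?thesis by blast
qed

definition scale :: "nat \<Rightarrow> nat set \<Rightarrow> nat set" where
  "scale p X = (\<lambda>x. p * x) ` X"

definition blow :: "nat \<Rightarrow> nat set \<Rightarrow> nat set" where
  "blow p X = {p * x + d | x d. x \<in> X \<and> d < p}"

lemma chi_tiling:
  assumes p: "0 < p" and T: "tiling M A B"
  shows "tiling (p * M) (scale p A) (blow p B)"
  unfolding tiling_def
proof (intro conjI)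
  have A0: "0 \<in> A" and B0: "0 \<in> B" using T unfolding tiling_def by auto
  show "0 \<in> scale p A" using A0 unfolding scale_def by force
  show "0 \<in> blow p B" using B0 p unfolding blow_def by force
  show "\<forall>a\<in>scale p A. \<forall>b\<in>blow p B. a + b < p * M"
  proof (intro ballI)
    fix a b assume "a \<in> scale p A" "b \<in> blow p B"
    then obtain x y d where "x \<in> A" "y \<in> B" "d < p" "a = p * x" "b = p * y + d"
      unfolding scale_def blow_def by auto
    moreover have "x + y < M" using tiling_lt[OF T \<open>x \<in> A\<close> \<open>y \<in> B\<close>] .
    ultimately have "Suc (x + y) \<le> M" by simp
    then have "p * Suc (x + y) \<le> p * M" by (rule mult_le_mono2)
    then show "a + b < p * M" using \<open>a = p * x\<close> \<open>b = p * y + d\<close> \<open>d < p\<close>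
      by (simp add: algebra_simps)
  qed
  show "\<forall>x<p * M. \<exists>a\<in>scale p A. \<exists>b\<in>blow p B. x = a + b"
  proof (intro allI impI)
    fix x assume x: "x < p * M"
    then have "x div p < M" by (simp add: less_mult_imp_div_less mult.commute)
    then obtain a b where ab: "a \<in> A" "b \<in> B" "x div p = a + b" using tiling_dec'[OF T] by blast
    have "p * a \<in> scale p A" using ab unfolding scale_def by auto
    moreover have "x mod p < p" using p by simp
    then have "p * b + x mod p \<in> blow p B" using ab unfolding blow_def by blast
    moreover have "x = p * (x div p) + x mod p" by simp
    then have "x = p * a + (p * b + x mod p)"
      using ab by (simp add: distrib_left)
    ultimately show "\<exists>a\<in>scale p A. \<exists>b\<in>blow p B. x = a + b" by blast
  qed
  show "\<forall>a\<in>scale p A. \<forall>b\<in>blow p B. \<forall>a'\<in>scale p A. \<forall>b'\<in>blow p B. a + b = a' + b' \<longrightarrow> a = a' \<and> b = b'"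
  proof (intro ballI impI)
    fix a b a' b' assume "a \<in> scale p A" "b \<in> blow p B" "a' \<in> scale p A" "b' \<in> blow p B"
      and eq: "a + b = a' + b'"
    then obtain x y d x' y' d' where h: "x \<in> A" "y \<in> B" "d < p" "a = p * x" "b = p * y + d"
      "x' \<in> A" "y' \<in> B" "d' < p" "a' = p * x'" "b' = p * y' + d'"
      unfolding scale_def blow_def by blast
    have e: "p * (x + y) + d = p * (x' + y') + d'" using eq h by (simp add: algebra_simps)
    have "(p * (x + y) + d) mod p = d" using h(3) by simp
    moreover have "(p * (x' + y') + d') mod p = d'" using h(8) by simp
    ultimately have "d = d'" using e by metis
    then have "x + y = x' + y'" using e p by simp
    then have "x = x'" "y = y'" using tiling_uniq[OF T h(1) h(2) h(6) h(7)] by simp_all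
    then show "a = a' \<and> b = b'" using h \<open>d = d'\<close> by simp
  qed
qed

lemma split_tiling:
  assumes p: "0 < p" and T: "tiling (p * M) A B" and dA: "\<forall>a\<in>A. p dvd a"
    and bB: "\<forall>t<p * M. t \<in> B \<longleftrightarrow> t - t mod p \<in> B"
  shows "tiling M {x. p * x \<in> A} {x. p * x \<in> B} \<and> A = scale p {x. p * x \<in> A}
     \<and> B = blow p {x. p * x \<in> B}"
proof (intro conjI)
  show "A = scale p {x. p * x \<in> A}"
  proof
    show "A \<subseteq> scale p {x. p * x \<in> A}"
    proof
      fix a assume aA: "a \<in> A"
      then obtain y where "a = p * y" using dA by blast
      then show "a \<in> scale p {x. p * x \<in> A}" unfolding scale_def using aA by auto
    qed
  qed (auto simp: scale_def)
  show "B = blow p {x. p * x \<in> B}"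
  proof
    show "B \<subseteq> blow p {x. p * x \<in> B}"
    proof
      fix b assume b: "b \<in> B"
      then have "b < p * M" using tiling_sub[OF T] by auto
      then have "b - b mod p \<in> B" using bB b by blast
      then have "p * (b div p) \<in> B" by (simp add: minus_mod_eq_mult_div)
      moreover have "b = p * (b div p) + b mod p" by simp
      moreover have "b mod p < p" using p by simp
      ultimately show "b \<in> blow p {x. p * x \<in> B}" unfolding blow_def by blast
    qed
    show "blow p {x. p * x \<in> B} \<subseteq> B"
    proof
      fix b assume "b \<in> blow p {x. p * x \<in> B}"
      then obtain x d where h: "p * x \<in> B" "d < p" "b = p * x + d" unfolding blow_def by auto
      have "p * x < p * M" using tiling_sub[OF T] h by auto
      then have "x < M" by simp
      then have "Suc x \<le> M" by simp
      then have "p * Suc x \<le> p * M" by (rule mult_le_mono2)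
      then have bl: "b < p * M" using h by simp
      have "b - b mod p = p * x" using h by simp
      then show "b \<in> B" using bB bl h by auto
    qed
  qed
  show "tiling M {x. p * x \<in> A} {x. p * x \<in> B}"
    unfolding tiling_def
  proof (intro conjI)
    show "0 \<in> {x. p * x \<in> A}" "0 \<in> {x. p * x \<in> B}" using T unfolding tiling_def by auto
    show "\<forall>a\<in>{x. p * x \<in> A}. \<forall>b\<in>{x. p * x \<in> B}. a + b < M"
    proof (intro ballI)
      fix a b assume "a \<in> {x. p * x \<in> A}" "b \<in> {x. p * x \<in> B}"
      then have "p * a + p * b < p * M" using tiling_lt[OF T] by auto
      then show "a + b < M" by (simp add: distrib_left[symmetric])
    qed
    show "\<forall>x<M. \<exists>a\<in>{x. p * x \<in> A}. \<exists>b\<in>{x. p * x \<in> B}. x = a + b"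
    proof (intro allI impI)
      fix x assume "x < M"
      then have "p * x < p * M" using p by simp
      then obtain a b where ab: "a \<in> A" "b \<in> B" "p * x = a + b" using tiling_dec'[OF T] by blast
      obtain a' where a': "a = p * a'" using dA ab by blast
      have "p dvd b" using ab a' by (metis dvd_add_right_iff dvd_triv_left)
      then obtain b' where b': "b = p * b'" by blast
      have "x = a' + b'" using ab a' b' p by (simp add: distrib_left[symmetric])
      then show "\<exists>a\<in>{x. p * x \<in> A}. \<exists>b\<in>{x. p * x \<in> B}. x = a + b" using ab a' b' by blast
    qed
    show "\<forall>a\<in>{x. p * x \<in> A}. \<forall>b\<in>{x. p * x \<in> B}. \<forall>a'\<in>{x. p * x \<in> A}. \<forall>b'\<in>{x. p * x \<in> B}.
        a + b = a' + b' \<longrightarrow> a = a' \<and> b = b'"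
    proof (intro ballI impI)
      fix a b a' b' assume h: "a \<in> {x. p * x \<in> A}" "b \<in> {x. p * x \<in> B}"
        "a' \<in> {x. p * x \<in> A}" "b' \<in> {x. p * x \<in> B}" and e: "a + b = a' + b'"
      have "p * a + p * b = p * a' + p * b'" using e by (simp add: distrib_left[symmetric])
      have m1: "p * a \<in> A" "p * b \<in> B" "p * a' \<in> A" "p * b' \<in> B" using h by auto
      have "p * a = p * a'" "p * b = p * b'"
        using tiling_uniq[OF T m1(1) m1(2) m1(3) m1(4)] \<open>p * a + p * b = p * a' + p * b'\<close> by auto
      then have "p * a = p * a' \<and> p * b = p * b'" by simp
      then show "a = a' \<and> b = b'" using p by simp
    qed
  qed
qed



definition TT :: "nat \<Rightarrow> nat \<Rightarrow> (nat set \<times> nat set) set" where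
  "TT p k = {X. tiling (p ^ k) (fst X) (snd X)}"

definition chi :: "nat \<Rightarrow> nat set \<times> nat set \<Rightarrow> nat set \<times> nat set" where
  "chi p X = (scale p (fst X), blow p (snd X))"

definition chi2 :: "nat \<Rightarrow> nat set \<times> nat set \<Rightarrow> nat set \<times> nat set" where
  "chi2 p X = (blow p (snd X), scale p (fst X))"

lemma scale_inv: "0 < p \<Longrightarrow> {x. p * x \<in> scale p A} = A"
  unfolding scale_def by auto

lemma blow_inv: assumes "0 < p" shows "{x. p * x \<in> blow p B} = B"
proof -
  have "p * x \<in> blow p B \<longleftrightarrow> x \<in> B" for x
  proof
    assume "p * x \<in> blow p B"
    then obtain y d where h: "y \<in> B" "d < p" "p * x = p * y + d" unfolding blow_def by auto
    then have "(p * y + d) mod p = 0" by (metis mod_mult_self1_is_0)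
    then have "d = 0" using h(2) by simp
    then show "x \<in> B" using h assms by simp
  next
    assume "x \<in> B" then show "p * x \<in> blow p B" unfolding blow_def using assms by force
  qed
  then show ?thesis by auto
qed

lemma inj_chi: assumes p: "0 < p" shows "inj (chi p)"
proof (rule injI)
  fix X Y assume "chi p X = chi p Y"
  then have "scale p (fst X) = scale p (fst Y)" "blow p (snd X) = blow p (snd Y)"
    unfolding chi_def by simp_all
  then have "fst X = fst Y" "snd X = snd Y" using scale_inv[OF p] blow_inv[OF p] by metis+
  then show "X = Y" by (simp add: prod_eq_iff)
qed

lemma inj_chi2: assumes p: "0 < p" shows "inj (chi2 p)"
proof (rule injI)
  fix X Y assume "chi2 p X = chi2 p Y"
  then have "scale p (fst X) = scale p (fst Y)" "blow p (snd X) = blow p (snd Y)"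
    unfolding chi2_def by simp_all
  then have "fst X = fst Y" "snd X = snd Y" using scale_inv[OF p] blow_inv[OF p] by metis+
  then show "X = Y" by (simp add: prod_eq_iff)
qed

lemma card_scale: "0 < p \<Longrightarrow> card (scale p A) = card A"
  unfolding scale_def by (rule card_image) (auto simp: inj_on_def)

lemma card_blow: assumes p: "0 < p" shows "card (blow p B) = p * card B"
proof -
  have e: "blow p B = (\<lambda>(x,d). p * x + d) ` (B \<times> {..<p})" unfolding blow_def by auto
  have "inj_on (\<lambda>(x,d). p * x + d) (B \<times> {..<p})"
  proof (rule inj_onI, clarify)
    fix x d y e assume h: "d < p" "e < p" "p * x + d = p * y + e"
    from h(3) have "(p * x + d) mod p = (p * y + e) mod p" by simp
    then have "d = e" using h(1,2) by simp
    then show "x = y \<and> d = e" using h p by simp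
  qed
  then have "card (blow p B) = card (B \<times> {..<p})" unfolding e by (rule card_image)
  then show ?thesis by (simp add: card_cartesian_product)
qed

lemma one_blow: assumes "1 < p" "0 \<in> B" shows "1 \<in> blow p B"
proof -
  have "p * 0 + 1 \<in> blow p B" unfolding blow_def using assms by blast
  then show ?thesis by simp
qed

lemma one_scale: assumes "1 < p" shows "1 \<notin> scale p A"
proof
  assume "1 \<in> scale p A"
  then obtain x where "1 = p * x" unfolding scale_def by blast
  then have "p dvd 1" by simp
  then show False using assms by simp
qed

lemma TT_fin: "finite (TT p k)"
proof -
  have "TT p k \<subseteq> Pow {..<p ^ k} \<times> Pow {..<p ^ k}"
  proof
    fix X assume "X \<in> TT p k"
    then have T: "tiling (p ^ k) (fst X) (snd X)" unfolding TT_def by simp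
    have "fst X \<in> Pow {..<p ^ k}" "snd X \<in> Pow {..<p ^ k}" using tiling_sub[OF T] by auto
    then show "X \<in> Pow {..<p ^ k} \<times> Pow {..<p ^ k}" by (simp add: mem_Times_iff)
  qed
  then show ?thesis by (rule finite_subset) auto
qed

lemma TT_0: "TT p 0 = {({0},{0})}"
proof
  show "TT p 0 \<subseteq> {({0},{0})}"
  proof
    fix X assume "X \<in> TT p 0"
    then have T: "tiling 1 (fst X) (snd X)" unfolding TT_def by simp
    then have "fst X = {0}" "snd X = {0}" using tiling_sub[OF T] T unfolding tiling_def by auto
    then show "X \<in> {({0},{0})}" by (simp add: prod_eq_iff)
  qed
  show "{({0},{0})} \<subseteq> TT p 0" unfolding TT_def tiling_def by auto
qed

lemma chi_TT: "0 < p \<Longrightarrow> Y \<in> TT p k \<Longrightarrow> chi p Y \<in> TT p (Suc k)"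
  unfolding TT_def chi_def using chi_tiling by auto

lemma chi2_TT: "0 < p \<Longrightarrow> Y \<in> TT p k \<Longrightarrow> chi2 p Y \<in> TT p (Suc k)"
  unfolding TT_def chi2_def using chi_tiling tiling_sym by auto

lemma TT_one: assumes p: "prime p" and X: "X \<in> TT p (Suc k)" and one: "1 \<in> snd X"
  shows "X \<in> chi p ` TT p k"
proof -
  have p0: "0 < p" using p prime_gt_0_nat by blast
  have T: "tiling (p * p ^ k) (fst X) (snd X)" using X unfolding TT_def by simp
  have T': "tiling (p ^ Suc k) (fst X) (snd X)" using X unfolding TT_def by simp
  note PB = pblock[OF p T' one]
  have dA: "\<forall>a\<in>fst X. p dvd a" using PB by blast
  have bB: "\<forall>t<p * p ^ k. t \<in> snd X \<longleftrightarrow> t - t mod p \<in> snd X"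
    using PB[THEN conjunct2] unfolding power_Suc .
  have "tiling (p ^ k) {x. p * x \<in> fst X} {x. p * x \<in> snd X} \<and> fst X = scale p {x. p * x \<in> fst X}
     \<and> snd X = blow p {x. p * x \<in> snd X}"
    using split_tiling[OF p0 T dA bB] .
  then have "({x. p * x \<in> fst X}, {x. p * x \<in> snd X}) \<in> TT p k"
    and "X = chi p ({x. p * x \<in> fst X}, {x. p * x \<in> snd X})"
    unfolding TT_def chi_def by (auto simp: prod_eq_iff)
  then show ?thesis by blast
qed

lemma TT_Suc: assumes p: "prime p"
  shows "TT p (Suc k) = chi p ` TT p k \<union> chi2 p ` TT p k"
proof
  have p0: "0 < p" using p prime_gt_0_nat by blast
  have p1: "1 < p" using p prime_gt_1_nat by blast
  show "chi p ` TT p k \<union> chi2 p ` TT p k \<subseteq> TT p (Suc k)" using chi_TT chi2_TT p0 by blast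
  show "TT p (Suc k) \<subseteq> chi p ` TT p k \<union> chi2 p ` TT p k"
  proof
    fix X assume X: "X \<in> TT p (Suc k)"
    then have T: "tiling (p ^ Suc k) (fst X) (snd X)" unfolding TT_def by simp
    have "1 < p ^ Suc k" using p1 by (metis one_less_power zero_less_Suc)
    then obtain a b where ab: "a \<in> fst X" "b \<in> snd X" "1 = a + b" using tiling_dec'[OF T] by blast
    show "X \<in> chi p ` TT p k \<union> chi2 p ` TT p k"
    proof (cases "a = 0")
      case True
      then have "1 \<in> snd X" using ab by simp
      then show ?thesis using TT_one[OF p X] by blast
    next
      case False
      then have "a = 1" using ab by linarith
      then have "1 \<in> fst X" using ab by simp
      moreover have "(snd X, fst X) \<in> TT p (Suc k)" using tiling_sym[OF T] unfolding TT_def by simp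
      ultimately obtain Y where Y: "Y \<in> TT p k" "(snd X, fst X) = chi p Y" using TT_one[OF p] by fastforce
      then have "X = chi2 p Y" unfolding chi_def chi2_def by (auto simp: prod_eq_iff)
      then show ?thesis using Y by blast
    qed
  qed
qed

lemma TT_one_eq: assumes p: "prime p"
  shows "{X \<in> TT p (Suc k). 1 \<in> snd X} = chi p ` TT p k"
proof
  have p1: "1 < p" using p prime_gt_1_nat by blast
  show "{X \<in> TT p (Suc k). 1 \<in> snd X} \<subseteq> chi p ` TT p k" using TT_one[OF p] by blast
  show "chi p ` TT p k \<subseteq> {X \<in> TT p (Suc k). 1 \<in> snd X}"
  proof
    fix X assume "X \<in> chi p ` TT p k"
    then obtain Y where Y: "Y \<in> TT p k" "X = chi p Y" by blast
    have "0 \<in> snd Y" using Y unfolding TT_def tiling_def by simp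
    then have "1 \<in> snd X" using Y one_blow[OF p1] unfolding chi_def by simp
    then show "X \<in> {X \<in> TT p (Suc k). 1 \<in> snd X}" using chi_TT Y p1 by auto
  qed
qed

lemma swap_count: "card {X \<in> TT p k. card (snd X) = c} = card {X \<in> TT p k. card (fst X) = c}"
proof -
  have e: "{X \<in> TT p k. card (snd X) = c} = (\<lambda>X. (snd X, fst X)) ` {X \<in> TT p k. card (fst X) = c}"
  proof
    show "{X \<in> TT p k. card (snd X) = c} \<subseteq> (\<lambda>X. (snd X, fst X)) ` {X \<in> TT p k. card (fst X) = c}"
    proof
      fix X assume X: "X \<in> {X \<in> TT p k. card (snd X) = c}"
      then have "(snd X, fst X) \<in> {X \<in> TT p k. card (fst X) = c}"
        unfolding TT_def using tiling_sym by auto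
      moreover have "X = (\<lambda>X. (snd X, fst X)) (snd X, fst X)" by simp
      ultimately show "X \<in> (\<lambda>X. (snd X, fst X)) ` {X \<in> TT p k. card (fst X) = c}" by blast
    qed
    show "(\<lambda>X. (snd X, fst X)) ` {X \<in> TT p k. card (fst X) = c} \<subseteq> {X \<in> TT p k. card (snd X) = c}"
      unfolding TT_def using tiling_sym by auto
  qed
  have i: "inj_on (\<lambda>X::nat set \<times> nat set. (snd X, fst X)) {X \<in> TT p k. card (fst X) = c}"
    by (auto simp: inj_on_def prod_eq_iff)
  show ?thesis unfolding e using card_image[OF i] .
qed

lemma count_TT: assumes p: "prime p"
  shows "card {X \<in> TT p k. card (fst X) = p ^ j} = k choose j"
proof (induction k arbitrary: j)
  case 0
  have p1: "1 < p" using p prime_gt_1_nat by blast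
  have pj: "j \<noteq> 0 \<Longrightarrow> 1 < p ^ j" using p1 one_less_power by blast
  have E: "{X \<in> TT p 0. card (fst X) = p ^ j} = (if j = 0 then {({0},{0})} else {})"
    using pj by (auto simp: TT_0)
  show ?case
  proof (cases "j = 0")
    case True then show ?thesis using E by simp
  next
    case False
    then have e0: "{X \<in> TT p 0. card (fst X) = p ^ j} = {}" using E by simp
    show ?thesis unfolding e0 using False by simp
  qed
next
  case (Suc k)
  have p0: "0 < p" using p prime_gt_0_nat by blast
  have p1: "1 < p" using p prime_gt_1_nat by blast
  define S1 where "S1 = {Y \<in> TT p k. card (fst Y) = p ^ j}"
  define S2 where "S2 = {Y \<in> TT p k. p * card (snd Y) = p ^ j}"
  have cf1: "card (fst (chi p Y)) = card (fst Y)" for Y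
    unfolding chi_def using card_scale[OF p0] by simp
  have cf2: "card (fst (chi2 p Y)) = p * card (snd Y)" for Y
    unfolding chi2_def using card_blow[OF p0] by simp
  have eq: "{X \<in> TT p (Suc k). card (fst X) = p ^ j} = chi p ` S1 \<union> chi2 p ` S2"
  proof
    show "{X \<in> TT p (Suc k). card (fst X) = p ^ j} \<subseteq> chi p ` S1 \<union> chi2 p ` S2"
    proof
      fix X assume X: "X \<in> {X \<in> TT p (Suc k). card (fst X) = p ^ j}"
      then obtain Y where Y: "Y \<in> TT p k" "X = chi p Y \<or> X = chi2 p Y"
        unfolding TT_Suc[OF p] by blast
      show "X \<in> chi p ` S1 \<union> chi2 p ` S2"
      proof (cases "X = chi p Y")
        case True
        then have "Y \<in> S1" using X Y(1) cf1 unfolding S1_def by simp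
        then show ?thesis using True by blast
      next
        case False
        then have "X = chi2 p Y" using Y(2) by simp
        then have "Y \<in> S2" using X Y(1) cf2 unfolding S2_def by simp
        then show ?thesis using \<open>X = chi2 p Y\<close> by blast
      qed
    qed
    show "chi p ` S1 \<union> chi2 p ` S2 \<subseteq> {X \<in> TT p (Suc k). card (fst X) = p ^ j}"
    proof
      fix X assume "X \<in> chi p ` S1 \<union> chi2 p ` S2"
      then obtain Y where "(Y \<in> S1 \<and> X = chi p Y) \<or> (Y \<in> S2 \<and> X = chi2 p Y)" by blast
      then show "X \<in> {X \<in> TT p (Suc k). card (fst X) = p ^ j}"
      proof
        assume h: "Y \<in> S1 \<and> X = chi p Y"
        then show ?thesis using chi_TT[OF p0] cf1 unfolding S1_def by auto
      next
        assume h: "Y \<in> S2 \<and> X = chi2 p Y"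
        then show ?thesis using chi2_TT[OF p0] cf2 unfolding S2_def by auto
      qed
    qed
  qed
  have disj: "chi p ` S1 \<inter> chi2 p ` S2 = {}"
  proof -
    have "1 \<in> snd (chi p Y)" if "Y \<in> S1" for Y
      using that one_blow[OF p1] unfolding S1_def TT_def tiling_def chi_def by auto
    moreover have "1 \<notin> snd (chi2 p Y)" for Y using one_scale[OF p1] unfolding chi2_def by simp
    ultimately have "False" if "Z \<in> chi p ` S1" "Z \<in> chi2 p ` S2" for Z
      using that by (metis image_iff)
    then show ?thesis by blast
  qed
  have fin1: "finite S1" "finite S2" unfolding S1_def S2_def using TT_fin by auto
  have c1: "card (chi p ` S1) = card S1" using inj_chi[OF p0] card_image inj_on_subset subset_UNIV by metis
  have c2: "card (chi2 p ` S2) = card S2" using inj_chi2[OF p0] card_image inj_on_subset subset_UNIV by metis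
  have cS1: "card S1 = k choose j" unfolding S1_def using Suc.IH .
  have cS2: "card S2 = (case j of 0 \<Rightarrow> 0 | Suc j' \<Rightarrow> k choose j')"
  proof (cases j)
    case 0
    have "p * c \<noteq> 1" for c using p1 by (simp add: mult_eq_1_iff)
    then have "S2 = {}" unfolding S2_def using 0 by auto
    then show ?thesis using 0 by simp
  next
    case (Suc j')
    have "S2 = {Y \<in> TT p k. card (snd Y) = p ^ j'}" unfolding S2_def using Suc p0 by auto
    then show ?thesis using swap_count Suc.IH Suc by simp
  qed
  have "card {X \<in> TT p (Suc k). card (fst X) = p ^ j} = card S1 + card S2"
    unfolding eq using card_Un_disjoint[OF _ _ disj] fin1 c1 c2 by simp
  then show ?case using cS1 cS2 by (cases j) auto
qed

definition symm :: "nat set \<Rightarrow> bool" where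
  "symm S \<longleftrightarrow> (\<exists>K. \<forall>x\<in>S. x \<le> K \<and> K - x \<in> S)"

lemma symm_scale: "symm A \<Longrightarrow> symm (scale p A)"
  unfolding symm_def scale_def
proof clarify
  fix K assume h: "\<forall>x\<in>A. x \<le> K \<and> K - x \<in> A"
  show "\<exists>K. \<forall>x\<in>(*) p ` A. x \<le> K \<and> K - x \<in> (*) p ` A"
  proof (rule exI[of _ "p * K"], clarify)
    fix x assume "x \<in> A"
    have "p * K - p * x = p * (K - x)" by (simp add: right_diff_distrib')
    then show "p * x \<le> p * K \<and> p * K - p * x \<in> (*) p ` A" using h \<open>x \<in> A\<close>
      by auto
  qed
qed

lemma symm_blow: assumes p: "0 < p" shows "symm B \<Longrightarrow> symm (blow p B)"
  unfolding symm_def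
proof clarify
  fix K assume h: "\<forall>x\<in>B. x \<le> K \<and> K - x \<in> B"
  show "\<exists>K. \<forall>x\<in>blow p B. x \<le> K \<and> K - x \<in> blow p B"
  proof (rule exI[of _ "p * K + (p - 1)"], intro ballI)
    fix z assume "z \<in> blow p B"
    then obtain x d where z: "x \<in> B" "d < p" "z = p * x + d" unfolding blow_def by auto
    have xk: "x \<le> K" using h z by auto
    then have "p * x \<le> p * K" by simp
    then have le: "z \<le> p * K + (p - 1)" using z by linarith
    have pk: "p * K = p * x + p * (K - x)" using xk by (simp add: diff_mult_distrib2)
    have "p * K + (p - 1) - z = p * (K - x) + (p - 1 - d)"
      using z(2,3) pk by linarith
    moreover have "K - x \<in> B" using h z by auto
    moreover have "p - 1 - d < p" using p by simp
    ultimately have "p * K + (p - 1) - z \<in> blow p B" unfolding blow_def by blast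
    then show "z \<le> p * K + (p - 1) \<and> p * K + (p - 1) - z \<in> blow p B" using le by simp
  qed
qed

lemma TT_symm: assumes p: "prime p"
  shows "X \<in> TT p k \<Longrightarrow> symm (fst X) \<and> symm (snd X)"
proof (induction k arbitrary: X)
  case 0
  then show ?case by (auto simp: TT_0 symm_def)
next
  case (Suc k)
  have p0: "0 < p" using p prime_gt_0_nat by blast
  from Suc.prems obtain Y where Y: "Y \<in> TT p k" "X = chi p Y \<or> X = chi2 p Y"
    unfolding TT_Suc[OF p] by blast
  have s1: "symm (fst Y)" "symm (snd Y)" using Suc.IH[OF Y(1)] by auto
  show ?case
  proof (cases "X = chi p Y")
    case True
    then show ?thesis using symm_scale[OF s1(1)] symm_blow[OF p0 s1(2)] unfolding chi_def by simp
  next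
    case False
    then have "X = chi2 p Y" using Y(2) by simp
    then show ?thesis using symm_scale[OF s1(1)] symm_blow[OF p0 s1(2)] unfolding chi2_def by simp
  qed
qed



lemma ssl: "sorted_wrt (<) (sorted_list_of_set (A::nat set))"
  using strict_sorted_list_of_set[of A] by simp

lemma ssl_len: "finite A \<Longrightarrow> length (sorted_list_of_set (A::nat set)) = card A"
  by simp

lemma ssl_set: "finite A \<Longrightarrow> set (sorted_list_of_set (A::nat set)) = A"
  by simp

lemma ssl_less: "i < j \<Longrightarrow> j < card A \<Longrightarrow> finite A \<Longrightarrow>
    sorted_list_of_set (A::nat set) ! i < sorted_list_of_set A ! j"
  using sorted_wrt_nth_less[OF ssl] by simp

lemma ssl_in: "finite A \<Longrightarrow> i < card A \<Longrightarrow> sorted_list_of_set (A::nat set) ! i \<in> A"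
  using nth_mem[of i "sorted_list_of_set A"] by simp

lemma ssl_ex: "finite A \<Longrightarrow> x \<in> A \<Longrightarrow> \<exists>i<card A. sorted_list_of_set (A::nat set) ! i = x"
  by (metis in_set_conv_nth ssl_len ssl_set)

lemma ssl0: assumes "finite A" "0 \<in> (A::nat set)" shows "sorted_list_of_set A ! 0 = 0"
proof -
  have ne: "A \<noteq> {}" using assms by auto
  have "Min A = 0" using assms by (meson Min_le le_zero_eq)
  then show ?thesis using sorted_list_of_set_nonempty[OF assms(1) ne] by simp
qed

lemma ssl1: assumes "finite A" "0 \<in> (A::nat set)" "1 \<in> A" shows "sorted_list_of_set A ! 1 = 1"
proof -
  have ne: "A \<noteq> {}" using assms by auto
  have "Min A = 0" using assms by (meson Min_le le_zero_eq)
  have ne2: "A - {0} \<noteq> {}" using assms by auto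
  have f2: "finite (A - {0})" using assms by simp
  have "Min (A - {0}) = 1"
  proof (rule antisym)
    show "Min (A - {0}) \<le> 1" using assms f2 by (simp add: Min_le)
    have "Min (A - {0}) \<in> A - {0}" using Min_in[OF f2 ne2] .
    then show "1 \<le> Min (A - {0})" by simp
  qed
  then show ?thesis using sorted_list_of_set_nonempty[OF assms(1) ne]
      sorted_list_of_set_nonempty[OF f2 ne2] \<open>Min A = 0\<close> by simp
qed

lemma sym_list:
  assumes fin: "finite (X::nat set)" and K: "\<forall>x\<in>X. x \<le> K \<and> K - x \<in> X" and i: "i < card X"
  shows "sorted_list_of_set X ! i + sorted_list_of_set X ! (card X - 1 - i) = K"
proof -
  define L where "L = sorted_list_of_set X"
  define n where "n = card X"
  have lenL: "length L = n" using fin L_def n_def by simp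
  have setL: "set L = X" using fin L_def by simp
  have sL: "sorted_wrt (<) L" using ssl L_def by simp
  define L' where "L' = map (\<lambda>x. K - x) (rev L)"
  have len': "length L' = n" using lenL L'_def by simp
  have nth': "L' ! k = K - L ! (n - 1 - k)" if "k < n" for k
    using that lenL unfolding L'_def by (simp add: rev_nth Suc_diff_Suc)
  have leK: "L ! k \<le> K" if "k < n" for k using K setL lenL that nth_mem by blast
  have sL': "sorted_wrt (<) L'"
    unfolding sorted_wrt_iff_nth_less
  proof (intro allI impI)
    fix k l assume kl: "k < l" "l < length L'"
    then have "L ! (n - 1 - l) < L ! (n - 1 - k)" using sorted_wrt_nth_less[OF sL] lenL len' by auto
    moreover have "L ! (n - 1 - k) \<le> K" using leK kl len' by simp
    ultimately show "L' ! k < L' ! l" using nth' kl len' by simp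
  qed
  have set': "set L' = X"
  proof
    show "set L' \<subseteq> X" unfolding L'_def using setL K by auto
    show "X \<subseteq> set L'"
    proof
      fix y assume y: "y \<in> X"
      then have "K - y \<in> set L" using K setL by auto
      moreover have "y = K - (K - y)" using K y by auto
      ultimately show "y \<in> set L'" unfolding L'_def by auto
    qed
  qed
  have "L' = L" using strict_sorted_equal[OF sL sL'] set' setL by simp
  then have "L ! i = K - L ! (n - 1 - i)" using nth' i n_def by metis
  moreover have "L ! (n - 1 - i) \<le> K" using leK i n_def by simp
  ultimately show ?thesis unfolding L_def n_def by simp
qed

lemma midx_id: "1 \<le> i \<Longrightarrow> i \<le> n \<Longrightarrow> midx n i = i"
proof -
  assume "1 \<le> i" "i \<le> n"
  then have e: "i + n - 1 = (i - 1) + n" by simp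
  have l: "i - 1 < n" using \<open>1 \<le> i\<close> \<open>i \<le> n\<close> by linarith
  have "((i - 1) + n) mod n = (i - 1) mod n" by (rule mod_add_self2)
  also have "\<dots> = i - 1" using l by (rule mod_less)
  finally have "((i - 1) + n) mod n = i - 1" .
  then show "midx n i = i" unfolding midx_def e using \<open>1 \<le> i\<close> by simp
qed

lemma ent_id: "i \<in> {1..n} \<Longrightarrow> j \<in> {1..n} \<Longrightarrow> ent n M i j = M i j"
  unfolding ent_def using midx_id by simp



definition Phi :: "nat \<Rightarrow> nat set \<times> nat set \<Rightarrow> nat \<Rightarrow> nat \<Rightarrow> real" where
  "Phi n X i j = (if i \<in> {1..n} \<and> j \<in> {1..n} then
     real (sorted_list_of_set (fst X) ! (i - 1) + sorted_list_of_set (snd X) ! (j - 1) + 1) else 0)"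

definition SS :: "nat \<Rightarrow> nat \<Rightarrow> (nat set \<times> nat set) set" where
  "SS p a = {X \<in> TT p (2 * a). 1 \<in> snd X \<and> card (fst X) = p ^ a \<and> card (snd X) = p ^ a}"

lemma n_ge2: fixes p a :: nat assumes "prime p" "1 \<le> a" shows "2 \<le> p ^ a"
proof -
  have "2 \<le> p" using assms prime_ge_2_nat by blast
  moreover have "p ^ 1 \<le> p ^ a" using assms(2) \<open>2 \<le> p\<close> by (intro power_increasing) auto
  then have "p \<le> p ^ a" by simp
  ultimately show ?thesis by linarith
qed

lemma Phi_principal:
  assumes p: "prime p" and a: "1 \<le> a" and n: "n = p ^ a" and X: "X \<in> SS p a"
  shows "principal_reversible_square n (Phi n X)"
proof -
  define A where "A = fst X"
  define B where "B = snd X"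
  define LA where "LA = sorted_list_of_set A"
  define LB where "LB = sorted_list_of_set B"
  define M where "M = Phi n X"
  have T: "tiling (p ^ (2 * a)) A B" using X unfolding SS_def TT_def A_def B_def by simp
  have N: "p ^ (2 * a) = n ^ 2" unfolding n power_mult[symmetric] by (simp only: mult.commute)
  have T': "tiling (n ^ 2) A B" using T N by simp
  have n2: "2 \<le> n" using n_ge2[OF p a] n by simp
  have finA: "finite A" and finB: "finite B" using tiling_fin[OF T] by auto
  have cA: "card A = n" and cB: "card B = n" using X n unfolding SS_def A_def B_def by auto
  have A0: "0 \<in> A" and B0: "0 \<in> B" using T unfolding tiling_def by auto
  have B1: "1 \<in> B" using X unfolding SS_def B_def by simp
  have LA0: "LA ! 0 = 0" using ssl0[OF finA A0] LA_def by simp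
  have LB0: "LB ! 0 = 0" using ssl0[OF finB B0] LB_def by simp
  have LB1: "LB ! 1 = 1" using ssl1[OF finB B0 B1] LB_def by simp
  have "symm A \<and> symm B" using TT_symm[OF p, of X "2 * a"] X unfolding SS_def A_def B_def by simp
  then obtain KA KB where KA: "\<forall>x\<in>A. x \<le> KA \<and> KA - x \<in> A" and KB: "\<forall>x\<in>B. x \<le> KB \<and> KB - x \<in> B"
    unfolding symm_def by blast
  have hA: "LA ! (i - 1) + LA ! (n + 1 - i - 1) = KA" if "i \<in> {1..n}" for i
  proof -
    have e: "n + 1 - i - 1 = card A - 1 - (i - 1)" using that cA by auto
    have i1: "i - 1 < card A" using that cA by auto
    have "LA ! (i - 1) + LA ! (card A - 1 - (i - 1)) = KA"
      using sym_list[OF finA KA i1] unfolding LA_def .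
    then show ?thesis unfolding e .
  qed
  have hB: "LB ! (i - 1) + LB ! (n + 1 - i - 1) = KB" if "i \<in> {1..n}" for i
  proof -
    have e: "n + 1 - i - 1 = card B - 1 - (i - 1)" using that cB by auto
    have i1: "i - 1 < card B" using that cB by auto
    have "LB ! (i - 1) + LB ! (card B - 1 - (i - 1)) = KB"
      using sym_list[OF finB KB i1] unfolding LB_def .
    then show ?thesis unfolding e .
  qed
  have E: "ent n M i j = real (LA ! (i - 1) + LB ! (j - 1) + 1)" if "i \<in> {1..n}" "j \<in> {1..n}" for i j
    using that ent_id[OF that, of M] unfolding M_def Phi_def LA_def LB_def A_def B_def by simp
  have rev: "n + 1 - i \<in> {1..n}" if "i \<in> {1..n}" for i using that by auto
  have ism: "is_matrix n M" unfolding is_matrix_def M_def Phi_def by auto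
  have R1: "ent n M i j + ent n M i (n + 1 - j) = real (2 * LA ! (i - 1) + KB + 2)"
    if "i \<in> {1..n}" "j \<in> {1..n}" for i j
  proof -
    have "ent n M i j + ent n M i (n + 1 - j) =
        real (LA ! (i - 1) + LB ! (j - 1) + 1 + (LA ! (i - 1) + LB ! (n + 1 - j - 1) + 1))"
      using E[OF that] E[OF that(1) rev[OF that(2)]] by simp
    also have "LA ! (i - 1) + LB ! (j - 1) + 1 + (LA ! (i - 1) + LB ! (n + 1 - j - 1) + 1)
        = 2 * LA ! (i - 1) + KB + 2" using hB[OF that(2)] by linarith
    finally show ?thesis .
  qed
  have R2: "ent n M i j + ent n M (n + 1 - i) j = real (2 * LB ! (j - 1) + KA + 2)"
    if "i \<in> {1..n}" "j \<in> {1..n}" for i j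
  proof -
    have "ent n M i j + ent n M (n + 1 - i) j =
        real (LA ! (i - 1) + LB ! (j - 1) + 1 + (LA ! (n + 1 - i - 1) + LB ! (j - 1) + 1))"
      using E[OF that] E[OF rev[OF that(1)] that(2)] by simp
    also have "LA ! (i - 1) + LB ! (j - 1) + 1 + (LA ! (n + 1 - i - 1) + LB ! (j - 1) + 1)
        = 2 * LB ! (j - 1) + KA + 2" using hA[OF that(1)] by linarith
    finally show ?thesis .
  qed
  have revsq: "reversible_square n M"
    unfolding reversible_square_def
  proof (intro conjI ism ballI)
    fix i j k assume ijk: "i \<in> {1..n}" "j \<in> {1..n}" "k \<in> {1..n}"
    show "ent n M i j + ent n M i (n + 1 - j) = ent n M i k + ent n M i (n + 1 - k)"
      using R1[OF ijk(1,2)] R1[OF ijk(1,3)] by simp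
    show "ent n M i j + ent n M (n + 1 - i) j = ent n M k j + ent n M (n + 1 - k) j"
      using R2[OF ijk(1,2)] R2[OF ijk(3,2)] by simp
  next
    fix i j k l assume ijk: "i \<in> {1..n}" "j \<in> {1..n}" "k \<in> {1..n}" "l \<in> {1..n}"
    show "ent n M i j + ent n M k l = ent n M i l + ent n M k j"
      using E[OF ijk(1,2)] E[OF ijk(3,4)] E[OF ijk(1,4)] E[OF ijk(3,2)] by simp
  qed
  have entries: "{ent n M i j | i j. i \<in> {1..n} \<and> j \<in> {1..n}} = real ` {1..n^2}"
  proof
    show "{ent n M i j | i j. i \<in> {1..n} \<and> j \<in> {1..n}} \<subseteq> real ` {1..n^2}"
    proof
      fix v assume "v \<in> {ent n M i j | i j. i \<in> {1..n} \<and> j \<in> {1..n}}"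
      then obtain i j where ij: "i \<in> {1..n}" "j \<in> {1..n}" "v = ent n M i j" by blast
      have "LA ! (i - 1) \<in> A" using ssl_in[OF finA] cA ij LA_def by auto
      moreover have "LB ! (j - 1) \<in> B" using ssl_in[OF finB] cB ij LB_def by auto
      ultimately have "LA ! (i - 1) + LB ! (j - 1) < n ^ 2" using tiling_lt[OF T'] by blast
      then have "LA ! (i - 1) + LB ! (j - 1) + 1 \<in> {1..n^2}" by simp
      then show "v \<in> real ` {1..n^2}" using E[OF ij(1,2)] ij(3) by blast
    qed
    show "real ` {1..n^2} \<subseteq> {ent n M i j | i j. i \<in> {1..n} \<and> j \<in> {1..n}}"
    proof
      fix v assume "v \<in> real ` {1..n^2}"
      then obtain w where w: "w \<in> {1..n^2}" "v = real w" by blast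
      then have "w - 1 < n ^ 2" by auto
      then obtain x y where xy: "x \<in> A" "y \<in> B" "w - 1 = x + y" using tiling_dec'[OF T'] by blast
      obtain i0 where i0: "i0 < n" "LA ! i0 = x" using ssl_ex[OF finA xy(1)] cA LA_def by auto
      obtain j0 where j0: "j0 < n" "LB ! j0 = y" using ssl_ex[OF finB xy(2)] cB LB_def by auto
      have ij: "Suc i0 \<in> {1..n}" "Suc j0 \<in> {1..n}" using i0 j0 by auto
      have "ent n M (Suc i0) (Suc j0) = real (x + y + 1)" using E[OF ij] i0 j0 by simp
      also have "x + y + 1 = w" using xy w by auto
      finally have "v = ent n M (Suc i0) (Suc j0)" using w by simp
      then show "v \<in> {ent n M i j | i j. i \<in> {1..n} \<and> j \<in> {1..n}}" using ij by blast
    qed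
  qed
  have rows: "\<forall>i\<in>{1..n}. \<forall>j\<in>{1..n}. j < n \<longrightarrow> ent n M i j < ent n M i (j + 1)"
  proof (intro ballI impI)
    fix i j assume ij: "i \<in> {1..n}" "j \<in> {1..n}" "j < n"
    have j1: "j + 1 \<in> {1..n}" using ij by auto
    have "LB ! (j - 1) < LB ! j" using ssl_less[OF _ _ finB, of "j - 1" j] ij cB LB_def by auto
    then show "ent n M i j < ent n M i (j + 1)" using E[OF ij(1,2)] E[OF ij(1) j1] by simp
  qed
  have cols: "\<forall>i\<in>{1..n}. \<forall>j\<in>{1..n}. i < n \<longrightarrow> ent n M i j < ent n M (i + 1) j"
  proof (intro ballI impI)
    fix i j assume ij: "i \<in> {1..n}" "j \<in> {1..n}" "i < n"
    have i1: "i + 1 \<in> {1..n}" using ij by auto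
    have "LA ! (i - 1) < LA ! i" using ssl_less[OF _ _ finA, of "i - 1" i] ij cA LA_def by auto
    then show "ent n M i j < ent n M (i + 1) j" using E[OF ij(1,2)] E[OF i1 ij(2)] by simp
  qed
  have one: "(1::nat) \<in> {1..n}" and two: "(2::nat) \<in> {1..n}" using n2 by auto
  have e11: "ent n M 1 1 = 1" using E[OF one one] LA0 LB0 by simp
  have e12: "ent n M 1 2 = 2" using E[OF one two] LA0 LB1 by simp
  show ?thesis unfolding principal_reversible_square_def M_def[symmetric]
    by (intro conjI revsq entries rows cols e11 e12)
qed

lemma Phi_inj:
  assumes p: "prime p" and a: "1 \<le> a" and n: "n = p ^ a"
  shows "inj_on (Phi n) (SS p a)"
proof (rule inj_onI)
  fix X Y assume X: "X \<in> SS p a" and Y: "Y \<in> SS p a" and eq: "Phi n X = Phi n Y"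
  have TX: "tiling (p ^ (2 * a)) (fst X) (snd X)" using X unfolding SS_def TT_def by simp
  have TY: "tiling (p ^ (2 * a)) (fst Y) (snd Y)" using Y unfolding SS_def TT_def by simp
  have fin: "finite (fst X)" "finite (snd X)" "finite (fst Y)" "finite (snd Y)"
    using tiling_fin[OF TX] tiling_fin[OF TY] by auto
  have zero: "0 \<in> fst X" "0 \<in> snd X" "0 \<in> fst Y" "0 \<in> snd Y"
    using TX TY unfolding tiling_def by auto
  have c: "card (fst X) = n" "card (snd X) = n" "card (fst Y) = n" "card (snd Y) = n"
    using X Y n unfolding SS_def by auto
  have n1: "1 \<le> n" using n_ge2[OF p a] n by simp
  have z: "sorted_list_of_set (fst X) ! 0 = 0" "sorted_list_of_set (snd X) ! 0 = 0"
    "sorted_list_of_set (fst Y) ! 0 = 0" "sorted_list_of_set (snd Y) ! 0 = 0"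
    using ssl0 fin zero by auto
  have "sorted_list_of_set (fst X) = sorted_list_of_set (fst Y)"
  proof (rule nth_equalityI)
    show "length (sorted_list_of_set (fst X)) = length (sorted_list_of_set (fst Y))"
      using fin c by simp
    fix k assume "k < length (sorted_list_of_set (fst X))"
    then have k: "Suc k \<in> {1..n}" using fin c by auto
    have "Phi n X (Suc k) 1 = Phi n Y (Suc k) 1" using eq by simp
    then show "sorted_list_of_set (fst X) ! k = sorted_list_of_set (fst Y) ! k"
      using k n1 z unfolding Phi_def by simp
  qed
  then have f: "fst X = fst Y" using fin by (metis ssl_set)
  have "sorted_list_of_set (snd X) = sorted_list_of_set (snd Y)"
  proof (rule nth_equalityI)
    show "length (sorted_list_of_set (snd X)) = length (sorted_list_of_set (snd Y))"
      using fin c by simp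
    fix k assume "k < length (sorted_list_of_set (snd X))"
    then have k: "Suc k \<in> {1..n}" using fin c by auto
    have "Phi n X 1 (Suc k) = Phi n Y 1 (Suc k)" using eq by simp
    then show "sorted_list_of_set (snd X) ! k = sorted_list_of_set (snd Y) ! k"
      using k n1 z unfolding Phi_def by simp
  qed
  then have "snd X = snd Y" using fin by (metis ssl_set)
  then show "X = Y" using f by (simp add: prod_eq_iff)
qed



lemma smono:
  fixes f :: "nat \<Rightarrow> nat"
  assumes st: "\<And>i. 1 \<le> i \<Longrightarrow> i < n \<Longrightarrow> f i < f (Suc i)"
  shows "1 \<le> i \<Longrightarrow> i < j \<Longrightarrow> j \<le> n \<Longrightarrow> f i < f j"
proof (induction j)
  case 0 then show ?case by simp
next
  case (Suc j)
  show ?case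
  proof (cases "i = j")
    case True then show ?thesis using st Suc.prems by simp
  next
    case False
    then have "f i < f j" using Suc by simp
    also have "f j < f (Suc j)" using st Suc.prems False by simp
    finally show ?thesis .
  qed
qed

lemma list_of_mono:
  fixes u :: "nat \<Rightarrow> nat"
  assumes st: "\<And>i. 1 \<le> i \<Longrightarrow> i < n \<Longrightarrow> u i < u (Suc i)"
  shows "sorted_list_of_set (u ` {1..n}) = map u [1..<n+1]"
proof -
  have s: "sorted_wrt (<) (map u [1..<n+1])"
    unfolding sorted_wrt_iff_nth_less
  proof (intro allI impI)
    fix i j assume ij: "i < j" "j < length (map u [1..<n+1])"
    have jn: "j < n" using ij(2) by (simp del: upt_Suc)
    then have "u (Suc i) < u (Suc j)" using smono[where f=u and n=n, OF st, of "Suc i" "Suc j"] ij(1) by simp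
    then show "map u [1..<n+1] ! i < map u [1..<n+1] ! j" using ij jn by (simp del: upt_Suc)
  qed
  have "set (map u [1..<n+1]) = u ` {1..n}" by (auto simp del: upt_Suc)
  moreover have "set (sorted_list_of_set (u ` {1..n})) = u ` {1..n}" by simp
  ultimately have "set (map u [1..<n+1]) = set (sorted_list_of_set (u ` {1..n}))" by simp
  from strict_sorted_equal[OF ssl s this] show ?thesis by simp
qed

lemma principal_in:
  assumes p: "prime p" and a: "1 \<le> a" and n: "n = p ^ a"
    and P: "principal_reversible_square n M"
  shows "M \<in> Phi n ` SS p a"
proof -
  have n2: "2 \<le> n" using n_ge2[OF p a] n by simp
  have N: "p ^ (2 * a) = n ^ 2" unfolding n power_mult[symmetric] by (simp only: mult.commute)
  have ism: "is_matrix n M" using P unfolding principal_reversible_square_def reversible_square_def by blast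
  have V: "\<forall>i\<in>{1..n}. \<forall>j\<in>{1..n}. \<forall>k\<in>{1..n}. \<forall>l\<in>{1..n}.
        ent n M i j + ent n M k l = ent n M i l + ent n M k j"
    using P unfolding principal_reversible_square_def reversible_square_def by blast
  have Ent: "{ent n M i j | i j. i \<in> {1..n} \<and> j \<in> {1..n}} = real ` {1..n^2}"
    using P unfolding principal_reversible_square_def by blast
  have cols: "\<forall>i\<in>{1..n}. \<forall>j\<in>{1..n}. i < n \<longrightarrow> ent n M i j < ent n M (i + 1) j"
    using P unfolding principal_reversible_square_def by blast
  have rows: "\<forall>i\<in>{1..n}. \<forall>j\<in>{1..n}. j < n \<longrightarrow> ent n M i j < ent n M i (j + 1)"
    using P unfolding principal_reversible_square_def by blast
  have e11: "ent n M 1 1 = 1" and e12: "ent n M 1 2 = 2"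
    using P unfolding principal_reversible_square_def by blast+
  have one: "(1::nat) \<in> {1..n}" and two: "(2::nat) \<in> {1..n}" using n2 by auto
  have E: "ent n M i j = M i j" if "i \<in> {1..n}" "j \<in> {1..n}" for i j using ent_id[OF that] .
  have Mv: "\<exists>v\<in>{1..n^2}. M i j = real v" if "i \<in> {1..n}" "j \<in> {1..n}" for i j
  proof -
    have "ent n M i j \<in> {ent n M i j | i j. i \<in> {1..n} \<and> j \<in> {1..n}}" using that by blast
    then show ?thesis using Ent E[OF that] by auto
  qed
  define u where "u i = nat \<lfloor>M i 1\<rfloor> - 1" for i
  define w where "w j = nat \<lfloor>M 1 j\<rfloor> - 1" for j
  have hu: "M i 1 = real (u i + 1)" if iA: "i \<in> {1..n}" for i
  proof -
    obtain v where v: "v \<in> {1..n^2}" "M i 1 = real v" using Mv[OF iA one] by blast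
    then show ?thesis unfolding u_def by simp
  qed
  have hw: "M 1 j = real (w j + 1)" if jA: "j \<in> {1..n}" for j
  proof -
    obtain v where v: "v \<in> {1..n^2}" "M 1 j = real v" using Mv[OF one jA] by blast
    then show ?thesis unfolding w_def by simp
  qed
  have M11: "M 1 1 = 1" using e11 E[OF one one] by simp
  have hM: "M i j = real (u i + w j + 1)" if "i \<in> {1..n}" "j \<in> {1..n}" for i j
  proof -
    have "ent n M i j + ent n M 1 1 = ent n M i 1 + ent n M 1 j" using V that one by blast
    then have "M i j + M 1 1 = M i 1 + M 1 j" using E that one by simp
    then show ?thesis using hu[OF that(1)] hw[OF that(2)] M11 by simp
  qed
  have u1: "u 1 = 0" using hu[OF one] M11 by simp
  have w1: "w 1 = 0" using hw[OF one] M11 by simp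
  have w2: "w 2 = 1" using hw[OF two] e12 E[OF one two] by simp
  have ust: "u i < u (Suc i)" if "1 \<le> i" "i < n" for i
  proof -
    have i: "i \<in> {1..n}" and i1: "i + 1 \<in> {1..n}" using that by auto
    have "ent n M i 1 < ent n M (i + 1) 1" using cols i one that by blast
    then have "M i 1 < M (i + 1) 1" using E i i1 one by simp
    then show ?thesis using hu[OF i] hu[OF i1] by simp
  qed
  have wst: "w i < w (Suc i)" if "1 \<le> i" "i < n" for i
  proof -
    have i: "i \<in> {1..n}" and i1: "i + 1 \<in> {1..n}" using that by auto
    have "ent n M 1 i < ent n M 1 (i + 1)" using rows i one that by blast
    then have "M 1 i < M 1 (i + 1)" using E i i1 one by simp
    then show ?thesis using hw[OF i] hw[OF i1] by simp
  qed
  define A where "A = u ` {1..n}"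
  define B where "B = w ` {1..n}"
  have LA: "sorted_list_of_set A = map u [1..<n+1]" unfolding A_def using list_of_mono ust by blast
  have LB: "sorted_list_of_set B = map w [1..<n+1]" unfolding B_def using list_of_mono wst by blast
  have finA: "finite A" and finB: "finite B" unfolding A_def B_def by auto
  have cA: "card A = n" using ssl_len[OF finA] LA by (simp del: upt_Suc)
  have cB: "card B = n" using ssl_len[OF finB] LB by (simp del: upt_Suc)
  have LAi: "sorted_list_of_set A ! (i - 1) = u i" if "i \<in> {1..n}" for i using that LA by (auto simp del: upt_Suc)
  have LBi: "sorted_list_of_set B ! (i - 1) = w i" if "i \<in> {1..n}" for i using that LB by (auto simp del: upt_Suc)
  define D where "D = {1..n} \<times> {1..n}"
  define f where "f = (\<lambda>(i, j). u i + w j)"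
  have lt: "u i + w j < n ^ 2" if ijA: "i \<in> {1..n}" "j \<in> {1..n}" for i j
  proof -
    obtain v where v: "v \<in> {1..n^2}" "M i j = real v" using Mv[OF ijA] by blast
    then have "v = u i + w j + 1" using hM[OF ijA] by simp
    then show ?thesis using v by auto
  qed
  have cover: "\<exists>i\<in>{1..n}. \<exists>j\<in>{1..n}. x = u i + w j" if "x < n ^ 2" for x
  proof -
    have "x + 1 \<in> {1..n^2}" using that by simp
    then have "real (x + 1) \<in> real ` {1..n^2}" by (rule imageI)
    then have "real (x + 1) \<in> {ent n M i j | i j. i \<in> {1..n} \<and> j \<in> {1..n}}" using Ent by simp
    then obtain i j where ij: "i \<in> {1..n}" "j \<in> {1..n}" "real (x + 1) = ent n M i j" by blast
    then have "real (x + 1) = real (u i + w j + 1)" using E hM by simp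
    then have "x = u i + w j" by simp
    then show ?thesis using ij by blast
  qed
  have fD: "f ` D = {..<n ^ 2}"
  proof
    show "f ` D \<subseteq> {..<n ^ 2}" unfolding f_def D_def using lt by auto
    show "{..<n ^ 2} \<subseteq> f ` D"
    proof
      fix x assume "x \<in> {..<n ^ 2}"
      then obtain i j where "i \<in> {1..n}" "j \<in> {1..n}" "x = u i + w j" using cover by blast
      then show "x \<in> f ` D" unfolding f_def D_def by force
    qed
  qed
  have cD: "card D = n ^ 2" unfolding D_def by (simp add: card_cartesian_product power2_eq_square)
  have injf: "inj_on f D" by (rule eq_card_imp_inj_on) (use fD cD D_def in auto)
  have T: "tiling (n ^ 2) A B"
    unfolding tiling_def
  proof (intro conjI)
    show "0 \<in> A" using u1 one unfolding A_def by force
    show "0 \<in> B" using w1 one unfolding B_def by force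
    show "\<forall>x\<in>A. \<forall>y\<in>B. x + y < n ^ 2" unfolding A_def B_def using lt by blast
    show "\<forall>x<n ^ 2. \<exists>a\<in>A. \<exists>b\<in>B. x = a + b" unfolding A_def B_def using cover by blast
    show "\<forall>x\<in>A. \<forall>y\<in>B. \<forall>x'\<in>A. \<forall>y'\<in>B. x + y = x' + y' \<longrightarrow> x = x' \<and> y = y'"
    proof (intro ballI impI)
      fix x y x' y' assume h: "x \<in> A" "y \<in> B" "x' \<in> A" "y' \<in> B" "x + y = x' + y'"
      obtain i j i' j' where ij: "i \<in> {1..n}" "j \<in> {1..n}" "i' \<in> {1..n}" "j' \<in> {1..n}"
        "x = u i" "y = w j" "x' = u i'" "y' = w j'" using h(1-4) unfolding A_def B_def by blast
      have "f (i, j) = f (i', j')" unfolding f_def using h(5) ij by simp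
      then have "(i, j) = (i', j')" using injf ij unfolding D_def inj_on_def by blast
      then show "x = x' \<and> y = y'" using ij by simp
    qed
  qed
  have B1: "1 \<in> B" unfolding B_def using imageI[OF two, of w] w2 by simp
  have XS: "(A, B) \<in> SS p a" unfolding SS_def TT_def using T N cA cB B1 n by simp
  have "M = Phi n (A, B)"
  proof (intro ext)
    fix i j
    show "M i j = Phi n (A, B) i j"
    proof (cases "i \<in> {1..n} \<and> j \<in> {1..n}")
      case True
      then show ?thesis unfolding Phi_def using hM LAi LBi by simp
    next
      case False
      then show ?thesis using ism unfolding Phi_def is_matrix_def by auto
    qed
  qed
  then show ?thesis using XS by blast
qed

lemma card_SS:
  assumes p: "prime p" and a: "1 \<le> a"
  shows "card (SS p a) = (2 * a - 1) choose a"
proof -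
  have p0: "0 < p" using p prime_gt_0_nat by blast
  define k where "k = 2 * a - 1"
  have k: "2 * a = Suc k" using a k_def by simp
  define S1 where "S1 = {Y \<in> TT p k. card (fst Y) = p ^ a}"
  have eq: "SS p a = chi p ` S1"
  proof
    show "SS p a \<subseteq> chi p ` S1"
    proof
      fix X assume X: "X \<in> SS p a"
      then have "X \<in> {X \<in> TT p (Suc k). 1 \<in> snd X}" unfolding SS_def k by simp
      then obtain Y where Y: "Y \<in> TT p k" "X = chi p Y" using TT_one_eq[OF p] by blast
      have "card (fst X) = card (fst Y)" using Y card_scale[OF p0] unfolding chi_def by simp
      then have "Y \<in> S1" using X Y unfolding S1_def SS_def by simp
      then show "X \<in> chi p ` S1" using Y by blast
    qed
    show "chi p ` S1 \<subseteq> SS p a"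
    proof
      fix X assume "X \<in> chi p ` S1"
      then obtain Y where Y: "Y \<in> S1" "X = chi p Y" by blast
      have YT: "Y \<in> TT p k" using Y unfolding S1_def by simp
      then have "X \<in> {X \<in> TT p (Suc k). 1 \<in> snd X}" using TT_one_eq[OF p] Y by blast
      then have X1: "X \<in> TT p (2 * a)" "1 \<in> snd X" using k by auto
      have cf: "card (fst X) = p ^ a" using Y card_scale[OF p0] unfolding chi_def S1_def by simp
      have "card (fst Y) * card (snd Y) = p ^ k" using tiling_card YT unfolding TT_def by blast
      moreover have "p ^ k = p ^ a * p ^ (a - 1)"
      proof -
        have kk: "k = a + (a - 1)" using a k_def by simp
        show ?thesis unfolding kk by (rule power_add)
      qed
      ultimately have "p ^ a * card (snd Y) = p ^ a * p ^ (a - 1)"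
        using Y unfolding S1_def by simp
      then have "card (snd Y) = p ^ (a - 1)" using p0 by simp
      then have "card (snd X) = p * p ^ (a - 1)" using Y card_blow[OF p0] unfolding chi_def by simp
      also have "\<dots> = p ^ a" using a by (simp add: power_eq_if)
      finally show "X \<in> SS p a" unfolding SS_def using X1 cf by simp
    qed
  qed
  have "card (chi p ` S1) = card S1" using inj_chi[OF p0] card_image inj_on_subset subset_UNIV by metis
  moreover have "card S1 = k choose a" unfolding S1_def using count_TT[OF p] .
  ultimately show ?thesis using eq k_def by simp
qed

theorem corollary4:
  fixes p a n :: nat
  assumes "prime p" and "a \<ge> 1" and "n = p ^ a"
  shows "card {M. principal_reversible_square n M} = (2 * a - 1) choose a"
proof -
  have "{M. principal_reversible_square n M} = Phi n ` SS p a"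
    using principal_in[OF assms] Phi_principal[OF assms] by blast
  then have "card {M. principal_reversible_square n M} = card (SS p a)"
    using card_image[OF Phi_inj[OF assms]] by simp
  then show ?thesis using card_SS assms by simp
qed

end
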